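(* Let $A$ be a local integral domain and let $\mathfrak{p}$ be a prime ideal of $A$ such that $A$ is straight at $\mathfrak{p}$. Then: (i) if $b\in\mathfrak{p}A_\mathfrak{p}$, then $b\in\mathfrak{p}A[b]$; (ii) $A$ is integrally closed in the ring $A+\mathfrak{p}A_\mathfrak{p}$.
   Context: All rings are commutative with identity. An overring of a domain $A$ is a ring $B$ with $A\subseteq B\subseteq \operatorname{Frac}(A)$. A domain $A$ is straight at a prime ideal $\mathfrak{p}$ if for every overring $B$ of $A$, the $(A/\mathfrak{p})$-module $B/\mathfrak{p}B$ is torsion-free. Here $A_\mathfrak{p}$ denotes the localization of $A$ at $\mathfrak{p}$, viewed inside $\operatorname{Frac}(A)$, and $A+\mathfrak{p}A_\mathfrak{p}$ is the subring of $\operatorname{Frac}(A)$ consisting of sums of an element of $A$ and an element of $\mathfrak{p}A_\mathfrak{p}$. *)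

theory Defs
  imports Main
begin

text \<open>Convention: the integral domain A is represented as a subring of a field type 'k
  which is its fraction field (every element of 'k is a quotient of elements of A).
  Overrings of A are then exactly the subrings of 'k containing A.\<close>

definition subring_of :: "'k::field set \<Rightarrow> bool" where
  "subring_of S \<longleftrightarrow> 0 \<in> S \<and> 1 \<in> S \<and> (\<forall>x\<in>S. \<forall>y\<in>S. x + y \<in> S \<and> x - y \<in> S \<and> x * y \<in> S)"

definition is_fraction_field_of :: "'k::field set \<Rightarrow> bool" where
  "is_fraction_field_of A \<longleftrightarrow> (\<forall>x. \<exists>a s. a \<in> A \<and> s \<in> A \<and> s \<noteq> 0 \<and> x = a / s)"

definition ideal_in :: "'k::field set \<Rightarrow> 'k set \<Rightarrow> bool" where
  "ideal_in I R \<longleftrightarrow> I \<subseteq> R \<and> 0 \<in> I \<and> (\<forall>x\<in>I. \<forall>y\<in>I. x + y \<in> I) \<and> (\<forall>r\<in>R. \<forall>x\<in>I. r * x \<in> I)"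

definition prime_ideal_in :: "'k::field set \<Rightarrow> 'k set \<Rightarrow> bool" where
  "prime_ideal_in P R \<longleftrightarrow> ideal_in P R \<and> 1 \<notin> P \<and>
     (\<forall>x\<in>R. \<forall>y\<in>R. x * y \<in> P \<longrightarrow> x \<in> P \<or> y \<in> P)"

definition maximal_ideal_in :: "'k::field set \<Rightarrow> 'k set \<Rightarrow> bool" where
  "maximal_ideal_in M R \<longleftrightarrow> ideal_in M R \<and> 1 \<notin> M \<and>
     (\<forall>J. ideal_in J R \<and> M \<subseteq> J \<longrightarrow> J = M \<or> 1 \<in> J)"

definition local_ring :: "'k::field set \<Rightarrow> bool" where
  "local_ring R \<longleftrightarrow> (\<exists>!M. maximal_ideal_in M R)"

definition ext_ideal :: "'k::field set \<Rightarrow> 'k set \<Rightarrow> 'k set" where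
  "ext_ideal I B = {\<Sum>i<n. a i * b i | (n::nat) a b. (\<forall>i<n. a i \<in> I \<and> b i \<in> B)}"

text \<open>A is straight at p: for every overring B, B/pB is a torsion-free A/p-module.\<close>
definition straight_at :: "'k::field set \<Rightarrow> 'k set \<Rightarrow> bool" where
  "straight_at A P \<longleftrightarrow> (\<forall>B. subring_of B \<and> A \<subseteq> B \<longrightarrow>
      (\<forall>a\<in>(A - P). \<forall>x\<in>B. a * x \<in> ext_ideal P B \<longrightarrow> x \<in> ext_ideal P B))"

definition adjoin :: "'k::field set \<Rightarrow> 'k \<Rightarrow> 'k set" where
  "adjoin A b = {\<Sum>i<n. a i * b ^ i | n a. \<forall>i<n. a i \<in> A}"

definition localization :: "'k::field set \<Rightarrow> 'k set \<Rightarrow> 'k set" where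
  "localization A P = {a / s | a s. a \<in> A \<and> s \<in> A \<and> s \<notin> P}"

definition loc_ideal :: "'k::field set \<Rightarrow> 'k set \<Rightarrow> 'k set" where
  "loc_ideal A P = {a / s | a s. a \<in> P \<and> s \<in> A \<and> s \<notin> P}"

definition set_plus :: "'k::field set \<Rightarrow> 'k set \<Rightarrow> 'k set" where
  "set_plus X Y = {x + y | x y. x \<in> X \<and> y \<in> Y}"

definition integral_over :: "'k::field set \<Rightarrow> 'k \<Rightarrow> bool" where
  "integral_over A x \<longleftrightarrow> (\<exists>n c. (\<forall>i<n. c i \<in> A) \<and> x ^ n + (\<Sum>i<n. c i * x ^ i) = 0)"

definition integrally_closed_in :: "'k::field set \<Rightarrow> 'k set \<Rightarrow> bool" where
  "integrally_closed_in A C \<longleftrightarrow> (\<forall>x\<in>C. integral_over A x \<longrightarrow> x \<in> A)"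

end

theory Submission
  imports Defs
begin

definition sp :: "'k::field set \<Rightarrow> 'k \<Rightarrow> nat \<Rightarrow> 'k set" where
  "sp S x k = {\<Sum>i<k. c i * x ^ i | c. \<forall>i<k. c i \<in> S}"

lemma sp_I: "(\<forall>i<k. c i \<in> S) \<Longrightarrow> (\<Sum>i<k. c i * x ^ i) \<in> sp S x k"
  unfolding sp_def by blast

lemma L_sum:
  fixes n :: nat
  assumes "(0::'a::comm_monoid_add) \<in> X" "\<forall>u\<in>X. \<forall>v\<in>X. u + v \<in> X" "\<forall>i<n. f i \<in> X"
  shows "sum f {..<n} \<in> X"
  using assms(3)
proof (induction n)
  case 0 then show ?case using assms(1) by simp
next
  case (Suc n) then show ?case using assms(2) by simp
qed

lemma sp_add:
  assumes "u \<in> sp S x k" "v \<in> sp S x k" "\<forall>a\<in>S. \<forall>b\<in>S. a + b \<in> S"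
  shows "u + v \<in> sp S x k"
proof -
  obtain c where c: "u = (\<Sum>i<k. c i * x ^ i)" "\<forall>i<k. c i \<in> S" using assms(1) unfolding sp_def by blast
  obtain d where d: "v = (\<Sum>i<k. d i * x ^ i)" "\<forall>i<k. d i \<in> S" using assms(2) unfolding sp_def by blast
  have e: "u + v = (\<Sum>i<k. (c i + d i) * x ^ i)" using c d by (simp add: sum.distrib distrib_right)
  have m: "\<forall>i<k. c i + d i \<in> S" using c d assms(3) by blast
  show ?thesis unfolding e by (rule sp_I[OF m])
qed

lemma sp_zero: "0 \<in> S \<Longrightarrow> 0 \<in> sp S x k"
  unfolding sp_def by (rule CollectI, rule exI[of _ "\<lambda>_. 0"]) simp

lemma sp_scal:
  assumes "u \<in> sp S x k" "\<forall>s\<in>S. r * s \<in> S'"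
  shows "r * u \<in> sp S' x k"
proof -
  obtain c where c: "u = (\<Sum>i<k. c i * x ^ i)" "\<forall>i<k. c i \<in> S" using assms(1) unfolding sp_def by blast
  have e: "r * u = (\<Sum>i<k. (r * c i) * x ^ i)" using c by (simp add: sum_distrib_left mult.assoc)
  have m: "\<forall>i<k. r * c i \<in> S'" using c assms(2) by blast
  show ?thesis unfolding e by (rule sp_I[OF m])
qed

lemma sp_pow:
  assumes "0 \<in> S" "a \<in> S" "j < k"
  shows "a * x ^ j \<in> sp S x k"
proof -
  have e: "(\<Sum>i<k. (if i = j then a else 0) * x ^ i) = a * x ^ j"
  proof -
    have "(\<Sum>i<k. (if i = j then a else 0) * x ^ i) = (\<Sum>i<k. (if i = j then a * x ^ j else 0))"
      by (rule sum.cong) auto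
    then show ?thesis using assms(3) by simp
  qed
  have m: "\<forall>i<k. (if i = j then a else 0) \<in> S" using assms by simp
  show ?thesis unfolding e[symmetric] by (rule sp_I[OF m])
qed

lemma sp_Suc:
  assumes "u \<in> sp S x (Suc k)"
  shows "\<exists>v c. u = v + c * x ^ k \<and> v \<in> sp S x k \<and> c \<in> S"
proof -
  obtain c where c: "u = (\<Sum>i<Suc k. c i * x ^ i)" "\<forall>i<Suc k. c i \<in> S" using assms(1) unfolding sp_def by blast
  have "u = (\<Sum>i<k. c i * x ^ i) + c k * x ^ k" using c by simp
  moreover have "(\<Sum>i<k. c i * x ^ i) \<in> sp S x k" using c unfolding sp_def by auto
  ultimately show ?thesis using c by blast
qed

lemma sp_one: "sp S x 1 \<subseteq> S"
  unfolding sp_def by auto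

lemma sp_pad:
  assumes "u \<in> sp S x k" "k \<le> K" "0 \<in> S"
  shows "u \<in> sp S x K"
proof -
  obtain c where c: "u = (\<Sum>i<k. c i * x ^ i)" "\<forall>i<k. c i \<in> S" using assms(1) unfolding sp_def by blast
  have e: "(\<Sum>i<K. (if i < k then c i else 0) * x ^ i) = (\<Sum>i<k. c i * x ^ i)"
    by (rule sum.mono_neutral_cong_right) (use assms(2) in auto)
  have m: "\<forall>i<K. (if i < k then c i else 0) \<in> S" using c assms(3) by auto
  show ?thesis unfolding c(1) e[symmetric] by (rule sp_I[OF m])
qed

lemma adjoin_eq: "adjoin A x = (\<Union>k. sp A x k)"
  unfolding adjoin_def sp_def by auto


lemma subringD:
  assumes "subring_of A"
  shows "0 \<in> A" "1 \<in> A" "\<And>x y. x \<in> A \<Longrightarrow> y \<in> A \<Longrightarrow> x + y \<in> A"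
    "\<And>x y. x \<in> A \<Longrightarrow> y \<in> A \<Longrightarrow> x - y \<in> A" "\<And>x y. x \<in> A \<Longrightarrow> y \<in> A \<Longrightarrow> x * y \<in> A"
  using assms unfolding subring_of_def by auto

lemma adj_add:
  assumes A: "subring_of A" and "u \<in> adjoin A x" "v \<in> adjoin A x"
  shows "u + v \<in> adjoin A x"
proof -
  obtain k where k: "u \<in> sp A x k" using assms(2) adjoin_eq by blast
  obtain m where m: "v \<in> sp A x m" using assms(3) adjoin_eq by blast
  have "u \<in> sp A x (k + m)" by (rule sp_pad[OF k]) (use subringD[OF A] in auto)
  moreover have "v \<in> sp A x (k + m)" by (rule sp_pad[OF m]) (use subringD[OF A] in auto)
  ultimately have "u + v \<in> sp A x (k + m)" by (rule sp_add) (use subringD[OF A] in auto)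
  then show ?thesis using adjoin_eq by blast
qed

lemma adj_scal:
  assumes A: "subring_of A" and "u \<in> adjoin A x" "r \<in> A"
  shows "r * u \<in> adjoin A x"
proof -
  obtain k where k: "u \<in> sp A x k" using assms(2) adjoin_eq by blast
  have "r * u \<in> sp A x k" by (rule sp_scal[OF k]) (use subringD[OF A] assms(3) in auto)
  then show ?thesis using adjoin_eq by blast
qed

lemma adj_pow:
  assumes A: "subring_of A" and "a \<in> A"
  shows "a * x ^ j \<in> adjoin A x"
proof -
  have "a * x ^ j \<in> sp A x (Suc j)" by (rule sp_pow) (use subringD[OF A] assms(2) in auto)
  then show ?thesis using adjoin_eq by blast
qed

lemma adj_zero: "subring_of A \<Longrightarrow> 0 \<in> adjoin A x"
  using adj_pow[of A 0 x 0] subringD by auto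

lemma adj_sum:
  fixes n :: nat
  assumes A: "subring_of A" and "\<forall>i<n. f i \<in> adjoin A x"
  shows "sum f {..<n} \<in> adjoin A x"
  by (rule L_sum) (use assms adj_zero adj_add in auto)

lemma adj_mult:
  assumes A: "subring_of A" and "u \<in> adjoin A x" "v \<in> adjoin A x"
  shows "u * v \<in> adjoin A x"
proof -
  obtain k c where c: "u = (\<Sum>j<k. c j * x ^ j)" "\<forall>j<k. c j \<in> A" using assms(2) unfolding adjoin_def by blast
  obtain m d where d: "v = (\<Sum>i<m. d i * x ^ i)" "\<forall>i<m. d i \<in> A" using assms(3) unfolding adjoin_def by blast
  have ux: "u * x ^ i \<in> adjoin A x" for i
  proof -
    have "u * x ^ i = (\<Sum>j<k. c j * x ^ (j + i))" unfolding c(1)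
      by (simp add: sum_distrib_right power_add mult.assoc)
    also have "\<dots> \<in> adjoin A x" by (rule adj_sum[OF A]) (use c(2) adj_pow[OF A] in auto)
    finally show ?thesis .
  qed
  have "u * v = (\<Sum>i<m. d i * (u * x ^ i))" unfolding d(1)
    by (simp add: sum_distrib_left mult.left_commute)
  also have "\<dots> \<in> adjoin A x" by (rule adj_sum[OF A]) (use d(2) ux adj_scal[OF A] in auto)
  finally show ?thesis .
qed

lemma adj_subring:
  assumes A: "subring_of A"
  shows "subring_of (adjoin A x)" "A \<subseteq> adjoin A x" "x \<in> adjoin A x"
proof -
  show sub: "A \<subseteq> adjoin A x" using adj_pow[OF A, of _ x 0] by auto
  show "x \<in> adjoin A x" using adj_pow[OF A subringD(2)[OF A], of x 1] by simp
  have m1: "-1 \<in> A" using subringD(4)[OF A subringD(1)[OF A] subringD(2)[OF A]] by simp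
  have "u - v \<in> adjoin A x" if "u \<in> adjoin A x" "v \<in> adjoin A x" for u v
  proof -
    have "(-1) * v \<in> adjoin A x" by (rule adj_scal[OF A that(2) m1])
    then have "u + (-1) * v \<in> adjoin A x" using adj_add[OF A that(1)] by blast
    then show ?thesis by simp
  qed
  note sb = this
  show "subring_of (adjoin A x)" unfolding subring_of_def
  proof (intro conjI ballI)
    show "0 \<in> adjoin A x" by (rule adj_zero[OF A])
    show "1 \<in> adjoin A x" using sub subringD(2)[OF A] by blast
  next
    fix u v assume uv: "u \<in> adjoin A x" "v \<in> adjoin A x"
    show "u + v \<in> adjoin A x" by (rule adj_add[OF A uv])
    show "u - v \<in> adjoin A x" by (rule sb[OF uv])
    show "u * v \<in> adjoin A x" by (rule adj_mult[OF A uv])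
  qed
qed


lemma exists_maximal:
  assumes A: "subring_of A" and I: "ideal_in I A" and "1 \<notin> I"
  shows "\<exists>M. maximal_ideal_in M A \<and> I \<subseteq> M"
proof -
  let ?F = "{J. ideal_in J A \<and> I \<subseteq> J \<and> 1 \<notin> J}"
  have "\<forall>C\<in>chains ?F. \<exists>U\<in>?F. \<forall>X\<in>C. X \<subseteq> U"
  proof
    fix C assume C: "C \<in> chains ?F"
    show "\<exists>U\<in>?F. \<forall>X\<in>C. X \<subseteq> U"
    proof (cases "C = {}")
      case True then show ?thesis using I assms(3) by auto
    next
      case False
      have sub: "C \<subseteq> ?F" and ch: "\<forall>X\<in>C. \<forall>Y\<in>C. X \<subseteq> Y \<or> Y \<subseteq> X"
        using C unfolding chains_def chain_subset_def by auto
      have "ideal_in (\<Union>C) A" unfolding ideal_in_def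
      proof (intro conjI ballI)
        show "\<Union>C \<subseteq> A" using sub unfolding ideal_in_def by blast
        show "0 \<in> \<Union>C" using sub False unfolding ideal_in_def by blast
      next
        fix u v assume "u \<in> \<Union>C" "v \<in> \<Union>C"
        then obtain X Y where XY: "X \<in> C" "Y \<in> C" "u \<in> X" "v \<in> Y" by blast
        show "u + v \<in> \<Union>C"
        proof (cases "X \<subseteq> Y")
          case True then show ?thesis using XY sub unfolding ideal_in_def by blast
        next
          case False then have "Y \<subseteq> X" using ch XY by blast
          then show ?thesis using XY sub unfolding ideal_in_def by blast
        qed
      next
        fix r u assume "r \<in> A" "u \<in> \<Union>C"
        then show "r * u \<in> \<Union>C" using sub unfolding ideal_in_def by blast
      qed
      moreover have "I \<subseteq> \<Union>C" using sub False by blast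
      moreover have "1 \<notin> \<Union>C" using sub by blast
      ultimately show ?thesis by blast
    qed
  qed
  from Zorn_Lemma2[OF this] obtain M where M: "M \<in> ?F" "\<forall>X\<in>?F. M \<subseteq> X \<longrightarrow> X = M" by blast
  have "maximal_ideal_in M A" unfolding maximal_ideal_in_def
  proof (intro conjI allI impI)
    show "ideal_in M A" "1 \<notin> M" using M by auto
  next
    fix J assume "ideal_in J A \<and> M \<subseteq> J"
    then show "J = M \<or> 1 \<in> J" using M by blast
  qed
  then show ?thesis using M by blast
qed

lemma local_unit:
  assumes A: "subring_of A" and L: "local_ring A" and P: "prime_ideal_in P A" and q: "q \<in> P"
  shows "\<exists>v\<in>A. (1 - q) * v = 1"
proof (rule ccontr)
  assume nu: "\<not> ?thesis"
  have PA: "P \<subseteq> A" using P unfolding prime_ideal_in_def ideal_in_def by blast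
  have qA: "q \<in> A" using q PA by blast
  have uA: "1 - q \<in> A" by (rule subringD(4)[OF A subringD(2)[OF A] qA])
  let ?I = "{(1 - q) * r | r. r \<in> A}"
  have I: "ideal_in ?I A" unfolding ideal_in_def
  proof (intro conjI ballI)
    show "?I \<subseteq> A" using uA subringD(5)[OF A] by blast
    show "0 \<in> ?I" using subringD(1)[OF A] by force
  next
    fix u v assume "u \<in> ?I" "v \<in> ?I"
    then obtain r s where rs: "u = (1 - q) * r" "v = (1 - q) * s" "r \<in> A" "s \<in> A" by blast
    have "u + v = (1 - q) * (r + s)" using rs by (simp add: distrib_left)
    moreover have "r + s \<in> A" by (rule subringD(3)[OF A rs(3,4)])
    ultimately show "u + v \<in> ?I" by blast
  next
    fix t u assume "t \<in> A" "u \<in> ?I"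
    then obtain r where r: "u = (1 - q) * r" "r \<in> A" by blast
    have "t * u = (1 - q) * (t * r)" using r by (simp add: mult.left_commute)
    moreover have "t * r \<in> A" by (rule subringD(5)[OF A \<open>t \<in> A\<close> r(2)])
    ultimately show "t * u \<in> ?I" by blast
  qed
  have "1 \<notin> ?I" using nu by force
  then obtain M1 where M1: "maximal_ideal_in M1 A" "?I \<subseteq> M1" using exists_maximal[OF A I] by blast
  have "ideal_in P A" "1 \<notin> P" using P unfolding prime_ideal_in_def by auto
  then obtain M2 where M2: "maximal_ideal_in M2 A" "P \<subseteq> M2" using exists_maximal[OF A] by blast
  have "M1 = M2" using L M1(1) M2(1) unfolding local_ring_def by blast
  have "1 - q \<in> M1" using M1(2) subringD(2)[OF A] by force
  moreover have "q \<in> M1" using M2(2) q \<open>M1 = M2\<close> by blast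
  ultimately have "(1 - q) + q \<in> M1" using M1(1) unfolding maximal_ideal_in_def ideal_in_def by blast
  then show False using M1(1) unfolding maximal_ideal_in_def by simp
qed


lemma nak_step:
  assumes A: "subring_of A" and PI: "ideal_in P A" and U: "\<forall>q\<in>P. \<exists>v\<in>A. (1 - q) * v = 1"
    and T: "adjoin A x \<subseteq> sp A x (Suc k)" and k: "1 \<le> k" and a: "a \<in> A"
    and y: "y \<in> ext_ideal P (adjoin A x)" and xy: "x = a + y"
  shows "adjoin A x \<subseteq> sp A x k"
proof -
  let ?T = "adjoin A x"
  let ?Q = "sp P x (Suc k)"
  have PA: "P \<subseteq> A" and P0: "0 \<in> P" and Padd: "\<And>u v. u \<in> P \<Longrightarrow> v \<in> P \<Longrightarrow> u + v \<in> P"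
    and Pm: "\<And>r u. r \<in> A \<Longrightarrow> u \<in> P \<Longrightarrow> r * u \<in> P"
    using PI unfolding ideal_in_def by auto
  have Tsub: "subring_of ?T" "A \<subseteq> ?T" "x \<in> ?T" using adj_subring[OF A] by auto
  note TD = subringD[OF Tsub(1)]
  have A0: "0 \<in> A" using subringD[OF A] by auto
  have Q0: "0 \<in> ?Q" by (rule sp_zero[OF P0])
  have Qadd: "u + v \<in> ?Q" if "u \<in> ?Q" "v \<in> ?Q" for u v
    by (rule sp_add[OF that]) (use Padd in blast)
  have PM: "p * t \<in> ?Q" if "p \<in> P" "t \<in> ?T" for p t
    by (rule sp_scal[of t A]) (use T that Pm in \<open>auto simp: mult.commute\<close>)
  have xpT: "x ^ i \<in> ?T" for i
    by (induction i) (use TD Tsub(3) in auto)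
  have TQ: "t * q \<in> ?Q" if tq: "t \<in> ?T" "q \<in> ?Q" for t q
  proof -
    obtain c where c: "q = (\<Sum>i<Suc k. c i * x ^ i)" "\<forall>i<Suc k. c i \<in> P"
      using tq(2) unfolding sp_def by blast
    have "t * q = (\<Sum>i<Suc k. c i * (t * x ^ i))" unfolding c(1) sum_distrib_left
      by (rule sum.cong) (simp_all add: mult.left_commute)
    also have "\<dots> \<in> ?Q" by (rule L_sum) (use Q0 Qadd c(2) PM TD xpT tq(1) in auto)
    finally show ?thesis .
  qed
  have yQ: "y \<in> ?Q"
  proof -
    obtain n :: nat and p t where pt: "y = (\<Sum>i<n. p i * t i)" "\<forall>i<n. p i \<in> P \<and> t i \<in> ?T"
      using y unfolding ext_ideal_def by blast
    show ?thesis unfolding pt(1) by (rule L_sum) (use Q0 Qadd pt(2) PM in auto)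
  qed
  have yT: "y \<in> ?T" using TD(4)[OF Tsub(3), of a] Tsub(2) a xy by auto
  have pows: "\<exists>a'\<in>A. \<exists>q\<in>?Q. x ^ j = a' + q" for j
  proof (induction j)
    case 0 then show ?case using subringD(2)[OF A] Q0 by (intro bexI[of _ 1] bexI[of _ 0]) auto
  next
    case (Suc j)
    then obtain a' q where aq: "a' \<in> A" "q \<in> ?Q" "x ^ j = a' + q" by blast
    have "x ^ Suc j = a * a' + ((a * q + a' * y) + y * q)"
      using aq(3) xy by (simp add: algebra_simps)
    moreover have "a * a' \<in> A" using subringD(5)[OF A a aq(1)] .
    moreover have "(a * q + a' * y) + y * q \<in> ?Q"
    proof -
      have "a \<in> ?T" "a' \<in> ?T" using Tsub(2) a aq(1) by blast+
      then have "a * q \<in> ?Q" "a' * y \<in> ?Q" "y * q \<in> ?Q"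
        using TQ[OF _ aq(2)] TQ[OF _ yQ] yT by blast+
      then show ?thesis using Qadd by blast
    qed
    ultimately show ?case by blast
  qed
  then obtain a0 q where aq: "a0 \<in> A" "q \<in> ?Q" "x ^ k = a0 + q" by blast
  obtain q' pk where q': "q = q' + pk * x ^ k" "q' \<in> sp P x k" "pk \<in> P"
    using sp_Suc[OF aq(2)] by blast
  obtain v where v: "v \<in> A" "(1 - pk) * v = 1" using U q'(3) by blast
  have q'A: "q' \<in> sp A x k" using q'(2) unfolding sp_def using PA by blast
  have a0s: "a0 \<in> sp A x k" using sp_pow[OF A0 aq(1), of 0 k x] k by simp
  have "(1 - pk) * x ^ k = a0 + q'" using aq(3) q'(1) by (simp add: algebra_simps)
  then have "x ^ k = v * (a0 + q')" using v(2)
    by (metis mult.assoc mult.commute mult_1)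
  moreover have "v * (a0 + q') \<in> sp A x k"
    by (rule sp_scal[of _ A]) (use sp_add[OF a0s q'A] subringD[OF A] v(1) in auto)
  ultimately have xk: "x ^ k \<in> sp A x k" by simp
  show ?thesis
  proof
    fix t assume "t \<in> ?T"
    then have "t \<in> sp A x (Suc k)" using T by blast
    then obtain w c where wc: "t = w + c * x ^ k" "w \<in> sp A x k" "c \<in> A" using sp_Suc by blast
    have "c * x ^ k \<in> sp A x k" by (rule sp_scal[OF xk]) (use wc(3) subringD[OF A] in auto)
    then show "t \<in> sp A x k" unfolding wc(1) by (rule sp_add[OF wc(2)]) (use subringD[OF A] in auto)
  qed
qed


lemma part2:
  fixes A P :: "'k::field set"
  assumes A: "subring_of A" and L: "local_ring A" and Pp: "prime_ideal_in P A"
    and St: "straight_at A P" and xC: "x \<in> set_plus A (loc_ideal A P)" and xi: "integral_over A x"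
  shows "x \<in> A"
proof -
  let ?T = "adjoin A x"
  have PI: "ideal_in P A" using Pp unfolding prime_ideal_in_def by auto
  have PA: "P \<subseteq> A" and P0: "0 \<in> P" using PI unfolding ideal_in_def by auto
  have U: "\<forall>q\<in>P. \<exists>v\<in>A. (1 - q) * v = 1" using local_unit[OF A L Pp] by blast
  obtain a y where ay: "x = a + y" "a \<in> A" "y \<in> loc_ideal A P" using xC unfolding set_plus_def by blast
  obtain a' s where as: "y = a' / s" "a' \<in> P" "s \<in> A" "s \<notin> P" using ay(3) unfolding loc_ideal_def by blast
  have s0: "s \<noteq> 0" using as P0 by auto
  have Tsub: "subring_of ?T" "A \<subseteq> ?T" "x \<in> ?T" using adj_subring[OF A] by auto
  have yT: "y \<in> ?T" using subringD(4)[OF Tsub(1) Tsub(3), of a] Tsub(2) ay by auto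
  have sy: "s * y = a'" using as s0 by simp
  have aI: "a' \<in> ext_ideal P ?T" unfolding ext_ideal_def
    by (rule CollectI, rule exI[of _ 1], rule exI[of _ "\<lambda>_. a'"], rule exI[of _ "\<lambda>_. 1"])
      (use as(2) subringD(2)[OF Tsub(1)] in auto)
  then have yI: "y \<in> ext_ideal P ?T"
  proof -
    have H: "\<forall>a\<in>A-P. \<forall>z\<in>?T. a*z \<in> ext_ideal P ?T \<longrightarrow> z \<in> ext_ideal P ?T"
      using St Tsub(1,2) unfolding straight_at_def by blast
    have "s \<in> A - P" using as(3,4) by blast
    from H[rule_format, OF this, of y] show ?thesis using sy yT aI by simp
  qed
  obtain n c where nc: "\<forall>i<n. c i \<in> A" "x ^ n + (\<Sum>i<n. c i * x ^ i) = 0"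
    using xi unfolding integral_over_def by blast
  have n1: "n \<noteq> 0" using nc(2) by (cases n) auto
  have A0: "0 \<in> A" using subringD[OF A] by auto
  have xn: "x ^ n \<in> sp A x n"
  proof -
    have "x ^ n = (\<Sum>i<n. (- c i) * x ^ i)" using nc(2) by (simp add: sum_negf eq_neg_iff_add_eq_0)
    moreover have "\<forall>i<n. - c i \<in> A" using nc(1) subringD(4)[OF A A0] by (metis diff_0)
    ultimately show ?thesis using sp_I by metis
  qed
  have xle: "x ^ i \<in> sp A x n" if "i \<le> n" for i
  proof (cases "i = n")
    case True then show ?thesis using xn by simp
  next
    case False then show ?thesis using sp_pow[OF A0 subringD(2)[OF A], of i n x] that by simp
  qed
  have Sadd: "\<forall>u\<in>sp A x n. \<forall>v\<in>sp A x n. u + v \<in> sp A x n"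
    using sp_add subringD(3)[OF A] by blast
  have Sscal: "r * u \<in> sp A x n" if "r \<in> A" "u \<in> sp A x n" for r u
    by (rule sp_scal[OF that(2)]) (use that(1) subringD(5)[OF A] in auto)
  have allp: "x ^ j \<in> sp A x n" for j
  proof (induction j)
    case 0 then show ?case using xle n1 by (metis le0)
  next
    case (Suc j)
    then obtain d where d: "x ^ j = (\<Sum>i<n. d i * x ^ i)" "\<forall>i<n. d i \<in> A" unfolding sp_def by blast
    have "x ^ Suc j = (\<Sum>i<n. d i * x ^ Suc i)" unfolding power_Suc d(1) sum_distrib_left
      by (rule sum.cong) (simp_all add: mult.left_commute)
    also have "\<dots> \<in> sp A x n" by (rule L_sum) (use sp_zero[OF A0] Sadd in auto, metis Sscal d(2) xle[of "Suc _"] Suc_leI power_Suc)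
    finally show ?case .
  qed
  have Tn: "?T \<subseteq> sp A x n"
  proof
    fix t assume "t \<in> ?T"
    then obtain m :: nat and e where e: "t = (\<Sum>i<m. e i * x ^ i)" "\<forall>i<m. e i \<in> A" unfolding adjoin_def by blast
    show "t \<in> sp A x n" unfolding e(1) by (rule L_sum) (use sp_zero[OF A0] Sadd Sscal e(2) allp in auto)
  qed
  have red: "?T \<subseteq> sp A x (Suc m) \<Longrightarrow> ?T \<subseteq> sp A x 1" for m
  proof (induction m)
    case 0 then show ?case by simp
  next
    case (Suc m)
    have "?T \<subseteq> sp A x (Suc m)"
      by (rule nak_step[OF A PI U Suc.prems _ ay(2) yI ay(1)]) simp
    then show ?case using Suc.IH by blast
  qed
  have "?T \<subseteq> sp A x 1" using red[of "n - 1"] Tn n1 by simp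
  then show ?thesis using Tsub(3) sp_one by blast
qed

lemma part1:
  fixes A P :: "'k::field set"
  assumes A: "subring_of A" and Pp: "prime_ideal_in P A"
    and St: "straight_at A P" and b: "b \<in> loc_ideal A P"
  shows "b \<in> ext_ideal P (adjoin A b)"
proof -
  let ?T = "adjoin A b"
  have P0: "0 \<in> P" using Pp unfolding prime_ideal_in_def ideal_in_def by auto
  obtain a' s where as: "b = a' / s" "a' \<in> P" "s \<in> A" "s \<notin> P" using b unfolding loc_ideal_def by blast
  have s0: "s \<noteq> 0" using as P0 by auto
  have Tsub: "subring_of ?T" "A \<subseteq> ?T" "b \<in> ?T" using adj_subring[OF A] by auto
  have sy: "s * b = a'" using as s0 by simp
  have aI: "a' \<in> ext_ideal P ?T" unfolding ext_ideal_def
    by (rule CollectI, rule exI[of _ 1], rule exI[of _ "\<lambda>_. a'"], rule exI[of _ "\<lambda>_. 1"])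
      (use as(2) subringD(2)[OF Tsub(1)] in auto)
  then show ?thesis
  proof -
    have H: "\<forall>a\<in>A-P. \<forall>z\<in>?T. a*z \<in> ext_ideal P ?T \<longrightarrow> z \<in> ext_ideal P ?T"
      using St Tsub(1,2) unfolding straight_at_def by blast
    have "s \<in> A - P" using as(3,4) by blast
    from H[rule_format, OF this, of b] show ?thesis using sy Tsub(3) aI by simp
  qed
qed

theorem lemma2p2:
  fixes A P :: "'k::field set"
  assumes "subring_of A"
    and "is_fraction_field_of A"
    and "local_ring A"
    and "prime_ideal_in P A"
    and "straight_at A P"
  shows "(\<forall>b\<in>loc_ideal A P. b \<in> ext_ideal P (adjoin A b))
         \<and> integrally_closed_in A (set_plus A (loc_ideal A P))"
  using part1[OF assms(1,4,5)] part2[OF assms(1,3,4,5)] unfolding integrally_closed_in_def by blast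

end
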